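(* For every $N\in\omega$ there are sets $F_1,\dots,F_{2^N}\in\mathcal{S}$ such that the vector $x=\sum_{j=1}^{2^N}\chi_{F_j}$ satisfies: (1) $x(i)\in\{2^r: r=0,\dots,N\}$ for every $i\in\mathrm{supp}(x)$; (2) $\phi(A_r)\ge 2^{N-r}$ for every $r=0,\dots,N$, where $A_r=\{i\in\omega: x(i)=2^r\}$.
   Context: $\omega=\{1,2,3,\dots\}$. The Schreier family is $\mathcal{S}=\{A\subseteq\omega: |A|\le\min(A)\}$ (including $\emptyset$). For finite $A,B\subseteq\omega$, $A<B$ means $\max A<\min B$. For a finite $A\subseteq\omega$, $\phi(A)$ is the minimal number $m$ such that $A=B_1\cup\dots\cup B_m$ with $B_1<B_2<\dots<B_m$ and each $B_i\in\mathcal{S}$ (the minimal number of consecutive Schreier sets covering $A$). $\chi_F$ is the characteristic function of $F$ and $\mathrm{supp}(x)=\{i:x(i)\neq0\}$. *)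

theory Defs
  imports Main
begin

text \<open>omega = {1,2,3,...} is modelled as the positive naturals.
  Schreier family: finite subsets A of omega with |A| <= min A (empty set included).\<close>
definition schreier :: "nat set \<Rightarrow> bool" where
  "schreier A \<longleftrightarrow> finite A \<and> 0 \<notin> A \<and> (A \<noteq> {} \<longrightarrow> card A \<le> Min A)"

definition phi :: "nat set \<Rightarrow> nat" where
  "phi A = (LEAST m. \<exists>Bs :: nat set list. length Bs = m \<and>
      (\<forall>B\<in>set Bs. schreier B \<and> B \<noteq> {}) \<and>
      sorted_wrt (\<lambda>B C. Max B < Min C) Bs \<and> \<Union>(set Bs) = A)"

definition chisum :: "(nat \<Rightarrow> nat set) \<Rightarrow> nat \<Rightarrow> nat \<Rightarrow> nat" where
  "chisum F n i = (\<Sum>j=1..n. if i \<in> F j then 1 else 0)"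

end

theory Submission
  imports Defs
begin

fun good :: "nat \<Rightarrow> nat set \<Rightarrow> bool" where
  "good 0 A = True"
| "good (Suc k) A = (A \<noteq> {} \<and> (\<forall>b. card (A \<inter> {..b}) \<le> Min A \<longrightarrow> good k (A \<inter> {b<..})))"

lemma cover_good:
  "(\<forall>B\<in>set Bs. schreier B \<and> B \<noteq> {}) \<Longrightarrow> sorted_wrt (\<lambda>B C. Max B < Min C) Bs
   \<Longrightarrow> \<Union>(set Bs) = A \<Longrightarrow> good k A \<Longrightarrow> k \<le> length Bs"
proof (induction Bs arbitrary: A k)
  case Nil
  then show ?case by (cases k) auto
next
  case (Cons B Bs)
  show ?case
  proof (cases k)
    case 0 then show ?thesis by simp
  next
    case (Suc k')
    have sB: "schreier B" "B \<noteq> {}" using Cons.prems(1) by auto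
    have fB: "finite B" using sB unfolding schreier_def by auto
    have fin: "\<forall>C\<in>set Bs. finite C" using Cons.prems(1) unfolding schreier_def by auto
    have gt: "\<And>C c. C \<in> set Bs \<Longrightarrow> c \<in> C \<Longrightarrow> Max B < c"
    proof -
      fix C c assume "C \<in> set Bs" "c \<in> C"
      then have "Max B < Min C" using Cons.prems(2) by auto
      also have "Min C \<le> c" using fin \<open>C \<in> set Bs\<close> \<open>c \<in> C\<close> by auto
      finally show "Max B < c" .
    qed
    have A: "A = B \<union> \<Union>(set Bs)" using Cons.prems(3) by auto
    have finA: "finite A" using A fB fin by auto
    have e1: "A \<inter> {..Max B} = B" using A gt fB by (force simp: not_less)
    have e2: "A \<inter> {Max B<..} = \<Union>(set Bs)" using A gt fB by (auto dest: Max_ge[OF fB] simp: not_less)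
    have mA: "Min A = Min B"
    proof -
      have "Min B \<in> A" using A sB fB by auto
      moreover have "\<forall>a\<in>A. Min B \<le> a"
      proof
        fix a assume "a \<in> A"
        then show "Min B \<le> a"
        proof (cases "a \<in> B")
          case True then show ?thesis using fB by auto
        next
          case False
          then obtain C where "C \<in> set Bs" "a \<in> C" using A \<open>a\<in>A\<close> by auto
          then have "Max B < a" using gt by auto
          moreover have "Min B \<le> Max B" using fB sB by auto
          ultimately show ?thesis by simp
        qed
      qed
      ultimately show ?thesis using Min_eqI[OF finA, of "Min B"] by blast
    qed
    have cB: "card B \<le> Min B" using sB unfolding schreier_def by auto
    from Cons.prems(4) Suc have "good k' (A \<inter> {Max B<..})"
      using e1 mA cB by auto
    then have "good k' (\<Union>(set Bs))" using e2 by simp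
    moreover have a1: "\<forall>B\<in>set Bs. schreier B \<and> B \<noteq> {}" using Cons.prems(1) by simp
    moreover have a2: "sorted_wrt (\<lambda>B C. Max B < Min C) Bs" using Cons.prems(2) by simp
    ultimately have "k' \<le> length Bs" using Cons.IH[OF a1 a2 refl] by blast
    then show ?thesis using Suc by simp
  qed
qed

lemma phi_ge:
  assumes "good k A" "finite A" "0 \<notin> A"
  shows "k \<le> phi A"
proof -
  let ?P = "\<lambda>m. \<exists>Bs :: nat set list. length Bs = m \<and>
      (\<forall>B\<in>set Bs. schreier B \<and> B \<noteq> {}) \<and>
      sorted_wrt (\<lambda>B C. Max B < Min C) Bs \<and> \<Union>(set Bs) = A"
  define Bs where "Bs = map (\<lambda>a. {a}) (sorted_list_of_set A)"
  have "\<forall>B\<in>set Bs. schreier B \<and> B \<noteq> {}"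
  proof
    fix B assume "B \<in> set Bs"
    then obtain a where a: "a \<in> A" "B = {a}" unfolding Bs_def using assms(2) by auto
    then have "a \<noteq> 0" using assms(3) by auto
    then show "schreier B \<and> B \<noteq> {}" unfolding schreier_def using a by auto
  qed
  moreover have "sorted_wrt (\<lambda>B C. Max B < Min C) Bs"
    unfolding Bs_def sorted_wrt_map using strict_sorted_list_of_set[of A] by simp
  moreover have "\<Union>(set Bs) = A" unfolding Bs_def using assms(2) by auto
  ultimately have "?P (length Bs)" by blast
  then have "?P (phi A)" unfolding phi_def by (rule LeastI)
  then obtain Cs where "length Cs = phi A" "\<forall>B\<in>set Cs. schreier B \<and> B \<noteq> {}"
      "sorted_wrt (\<lambda>B C. Max B < Min C) Cs" "\<Union>(set Cs) = A" by blast
  then show ?thesis using cover_good[of Cs A k] assms(1) by simp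
qed

fun chain :: "nat \<Rightarrow> nat \<Rightarrow> nat set \<Rightarrow> bool" where
  "chain 0 s A = (A = {})"
| "chain (Suc k) s A = (\<exists>P. P \<noteq> {} \<and> finite P \<and> P \<subseteq> A \<and> s \<le> card P \<and>
      (\<forall>a\<in>P. \<forall>b\<in>A-P. a < b) \<and> chain k (Max P + 1) (A - P))"

lemma chain_finite: "chain k s A \<Longrightarrow> finite A"
proof (induction k arbitrary: s A)
  case 0 then show ?case by simp
next
  case (Suc k)
  then obtain P where "finite P" "P \<subseteq> A" "chain k (Max P + 1) (A - P)" unfolding chain.simps by blast
  then show ?case using Suc.IH by (metis Diff_partition finite_UnI)
qed

lemma chain_mono: "chain k s A \<Longrightarrow> t \<le> s \<Longrightarrow> chain k t A"
proof (cases k)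
  case 0 then show "chain k s A \<Longrightarrow> t \<le> s \<Longrightarrow> chain k t A" by simp
next
  case (Suc k')
  show "chain k s A \<Longrightarrow> t \<le> s \<Longrightarrow> chain k t A" unfolding Suc chain.simps by (meson le_trans)
qed

lemma chain_sub: "chain (Suc k) s A \<Longrightarrow> A \<subseteq> {..M} \<Longrightarrow> s \<le> Suc M"
proof -
  assume c: "chain (Suc k) s A" and A: "A \<subseteq> {..M}"
  then obtain P where "P \<subseteq> A" "s \<le> card P" unfolding chain.simps by blast
  moreover have "card P \<le> card {..M}" using A \<open>P \<subseteq> A\<close> by (intro card_mono) auto
  ultimately show ?thesis by simp
qed

lemma chain_good_aux:
  "S \<noteq> {} \<Longrightarrow> finite S \<Longrightarrow> chain k (Max S + 1) R \<Longrightarrow> (\<forall>a\<in>S. \<forall>b\<in>R. a < b)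
   \<Longrightarrow> good (Suc k) (S \<union> R)"
proof (induction k arbitrary: S R)
  case 0 then show ?case by simp
next
  case (Suc k)
  from Suc.prems(3) obtain P where P: "P \<noteq> {}" "finite P" "P \<subseteq> R" "Max S + 1 \<le> card P"
    "\<forall>a\<in>P. \<forall>b\<in>R-P. a < b" "chain k (Max P + 1) (R - P)" unfolding chain.simps by blast
  define R2 where "R2 = R - P"
  have R: "R = P \<union> R2" using P(3) R2_def by auto
  have finR: "finite R" using chain_finite Suc.prems(3) by blast
  have mS: "Min (S \<union> R) = Min S"
  proof (rule Min_eqI)
    show "finite (S \<union> R)" using finR Suc.prems(2) by simp
    show "Min S \<in> S \<union> R" using Suc.prems(1,2) by simp
    fix y assume "y \<in> S \<union> R"
    then show "Min S \<le> y"
    proof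
      assume "y \<in> S" then show ?thesis using Suc.prems(2) by simp
    next
      assume "y \<in> R"
      then have "Min S < y" using Suc.prems(1,2,4) by simp
      then show ?thesis by simp
    qed
  qed
  have MS: "Min S \<le> Max S" using Suc.prems(1,2) by simp
  show ?case
  proof (subst good.simps, intro conjI allI impI)
    show "S \<union> R \<noteq> {}" using Suc.prems(1) by simp
    fix b assume hb: "card ((S \<union> R) \<inter> {..b}) \<le> Min (S \<union> R)"
    show "good (Suc k) ((S \<union> R) \<inter> {b<..})"
    proof (cases "b < Max S")
      case True
      define S' where "S' = S \<inter> {b<..}"
      have "Max S \<in> S'" using True Suc.prems(1,2) S'_def by simp
      then have ne: "S' \<union> P \<noteq> {}" by auto
      have fin: "finite (S' \<union> P)" using S'_def Suc.prems(2) P(2) by simp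
      have lt: "\<forall>a\<in>S' \<union> P. \<forall>b\<in>R2. a < b" using S'_def Suc.prems(4) P(5) R2_def by auto
      have "Max (S' \<union> P) \<le> Max P"
      proof (rule Max.boundedI[OF fin ne])
        fix a assume "a \<in> S' \<union> P"
        then show "a \<le> Max P"
        proof
          assume "a \<in> S'"
          have "Max P \<in> P" using P(1,2) by simp
          then have "a < Max P" using Suc.prems(4) S'_def P(3) \<open>a \<in> S'\<close> by auto
          then show ?thesis by simp
        next
          assume "a \<in> P" then show ?thesis using P(2) by simp
        qed
      qed
      then have ch: "chain k (Max (S' \<union> P) + 1) R2" using chain_mono P(6) R2_def by simp
      have "good (Suc k) ((S' \<union> P) \<union> R2)" using Suc.IH[OF ne fin ch lt] .
      moreover have "(S \<union> R) \<inter> {b<..} = (S' \<union> P) \<union> R2"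
      proof -
        have "R \<subseteq> {b<..}"
        proof
          fix y assume "y \<in> R"
          then have "Max S < y" using Suc.prems(1,2,4) by simp
          then show "y \<in> {b<..}" using True by simp
        qed
        then show ?thesis using R S'_def by auto
      qed
      ultimately show ?thesis by simp
    next
      case False
      then have Sb: "S \<subseteq> {..b}" using Suc.prems(2) by (auto simp: not_less intro: le_trans[OF Max_ge])
      have "\<not> P \<subseteq> {..b}"
      proof
        assume "P \<subseteq> {..b}"
        then have sub: "S \<union> P \<subseteq> (S \<union> R) \<inter> {..b}" using Sb P(3) by auto
        have disj: "S \<inter> P = {}" using Suc.prems(4) P(3) by fastforce
        have "card (S \<union> P) \<le> card ((S \<union> R) \<inter> {..b})" using sub by (intro card_mono) auto
        moreover have "card (S \<union> P) = card S + card P" using disj Suc.prems(2) P(2) card_Un_disjoint by blast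
        moreover have "card S \<ge> 1" using Suc.prems(1,2) by (simp add: Suc_le_eq card_gt_0_iff)
        ultimately show False using hb mS MS P(4) by linarith
      qed
      then obtain p where p: "p \<in> P" "b < p" by (meson atMost_iff not_le subsetI)
      define S2 where "S2 = P \<inter> {b<..}"
      have ne: "S2 \<noteq> {}" using p S2_def by auto
      have fin: "finite S2" using S2_def P(2) by simp
      have lt: "\<forall>a\<in>S2. \<forall>b\<in>R2. a < b" using S2_def P(5) R2_def by auto
      have "Max S2 \<le> Max P" using S2_def P(2) ne by (simp add: Max_mono)
      then have ch: "chain k (Max S2 + 1) R2" using chain_mono P(6) R2_def by simp
      have "good (Suc k) (S2 \<union> R2)" using Suc.IH[OF ne fin ch lt] .
      moreover have "(S \<union> R) \<inter> {b<..} = S2 \<union> R2"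
      proof -
        have "R2 \<subseteq> {b<..}"
        proof
          fix y assume "y \<in> R2"
          then have "p < y" using P(5) p R2_def by auto
          then show "y \<in> {b<..}" using p by simp
        qed
        then show ?thesis using R S2_def Sb by auto
      qed
      ultimately show ?thesis by simp
    qed
  qed
qed

lemma chain_good: "chain (Suc k) s A \<Longrightarrow> good (Suc k) A"
proof -
  assume "chain (Suc k) s A"
  then obtain P where P: "P \<noteq> {}" "finite P" "P \<subseteq> A"
    "\<forall>a\<in>P. \<forall>b\<in>A-P. a < b" "chain k (Max P + 1) (A - P)" unfolding chain.simps by blast
  have g: "good (Suc k) (P \<union> (A - P))" using chain_good_aux[OF P(1,2,5,4)] .
  have e: "P \<union> (A - P) = A" using P(3) by auto
  show ?thesis using g unfolding e .
qed

lemma chain_concat: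
  "chain a s A \<Longrightarrow> chain b (Suc M) B \<Longrightarrow> A \<subseteq> {..M} \<Longrightarrow> B \<subseteq> {M<..} \<Longrightarrow> s \<le> Suc M
   \<Longrightarrow> chain (a + b) s (A \<union> B)"
proof (induction a arbitrary: s A)
  case 0 then show ?case using chain_mono by simp
next
  case (Suc a)
  from Suc.prems(1) obtain P where P: "P \<noteq> {}" "finite P" "P \<subseteq> A" "s \<le> card P"
    "\<forall>a\<in>P. \<forall>b\<in>A-P. a < b" "chain a (Max P + 1) (A - P)" unfolding chain.simps by blast
  have "Max P \<in> P" using P(1,2) by simp
  then have "Max P \<in> A" using P(3) by auto
  then have "Max P + 1 \<le> Suc M" using Suc.prems(3) by auto
  then have c: "chain (a + b) (Max P + 1) ((A - P) \<union> B)"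
    using Suc.IH[OF P(6) Suc.prems(2) _ Suc.prems(4)] Suc.prems(3) by auto
  have e: "(A \<union> B) - P = (A - P) \<union> B" using P(3) Suc.prems(3,4) by fastforce
  have lt: "\<forall>x\<in>P. \<forall>y\<in>(A \<union> B) - P. x < y"
  proof (intro ballI)
    fix x y assume "x \<in> P" "y \<in> (A \<union> B) - P"
    then show "x < y"
    proof (cases "y \<in> B")
      case True
      then show ?thesis using \<open>x \<in> P\<close> P(3) Suc.prems(3,4) by force
    next
      case False then show ?thesis using P(5) \<open>x \<in> P\<close> \<open>y \<in> (A \<union> B) - P\<close> by auto
    qed
  qed
  show ?case using P(1-4) lt c e by auto
qed

lemma chisum_nz: "chisum F m i \<noteq> 0 \<Longrightarrow> \<exists>j\<in>{1..m}. i \<in> F j"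
  unfolding chisum_def by (rule ccontr) auto

lemma chisum_le: "chisum F m i \<le> m"
proof -
  have "chisum F m i \<le> (\<Sum>j=1..m. (1::nat))" unfolding chisum_def by (rule sum_mono) auto
  then show ?thesis by simp
qed

lemma chisum_all: "\<forall>j\<in>{1..m}. i \<in> F j \<Longrightarrow> chisum F m i = m"
  unfolding chisum_def by simp

lemma chisum_split: "chisum G (m + m) i = chisum G m i + chisum (\<lambda>j. G (j + m)) m i"
proof -
  have "chisum G (m + m) i = (\<Sum>j=1..m. if i \<in> G j then 1 else 0) + (\<Sum>j=m+1..m+m. if i \<in> G j then 1 else 0)"
    unfolding chisum_def by (rule sum.ub_add_nat) simp
  also have "(\<Sum>j=m+1..m+m. if i \<in> G j then 1 else 0) = (\<Sum>j=1..m. if i \<in> G (j + m) then 1 else 0)"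
    by (rule sum.reindex_bij_witness[where i="\<lambda>j. j + m" and j="\<lambda>j. j - m"]) auto
  finally show ?thesis unfolding chisum_def .
qed

lemma chisum_cong: "(\<And>j. j \<in> {1..m} \<Longrightarrow> (i \<in> G j) = (i \<in> F j)) \<Longrightarrow> chisum G m i = chisum F m i"
  unfolding chisum_def by (rule sum.cong) auto

definition invF :: "nat \<Rightarrow> nat \<Rightarrow> nat \<Rightarrow> nat \<Rightarrow> (nat \<Rightarrow> nat set) \<Rightarrow> bool" where
  "invF N s k n F \<longleftrightarrow>
     (\<forall>j\<in>{1..2^N}. finite (F j) \<and> F j \<noteq> {} \<and> F j \<subseteq> {n..} \<and> card (F j) + k \<le> Min (F j)) \<and>
     (\<forall>i. chisum F (2^N) i \<noteq> 0 \<longrightarrow> (\<exists>r\<le>N. chisum F (2^N) i = 2^r)) \<and>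
     (\<forall>r\<le>N. chain (2^(N-r)) s {i. chisum F (2^N) i = 2^r})"

lemma invF_set: "invF N s k n F \<Longrightarrow> j \<in> {1..2^N} \<Longrightarrow>
   finite (F j) \<and> F j \<noteq> {} \<and> F j \<subseteq> {n..} \<and> card (F j) + k \<le> Min (F j)"
  unfolding invF_def by blast

lemma invF_pow: "invF N s k n F \<Longrightarrow> chisum F (2^N) i \<noteq> 0 \<Longrightarrow> \<exists>r\<le>N. chisum F (2^N) i = 2^r"
  unfolding invF_def by blast

lemma invF_chain: "invF N s k n F \<Longrightarrow> r \<le> N \<Longrightarrow> chain (2^(N-r)) s {i. chisum F (2^N) i = 2^r}"
  unfolding invF_def by blast

lemma construct: "\<forall>s k. \<exists>n0. \<forall>n\<ge>n0. \<exists>F. invF N s k n F"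
proof (induction N)
  case 0
  show ?case
  proof (intro allI)
    fix s k :: nat
    define s' where "s' = max s 1"
    show "\<exists>n0. \<forall>n\<ge>n0. \<exists>F. invF 0 s k n F"
    proof (rule exI[of _ "s' + k"], intro allI impI)
      fix n assume hn: "s' + k \<le> n"
      define F where "F = (\<lambda>j::nat. {n..<n+s'})"
      have s1: "s' \<ge> 1" "s \<le> s'" using s'_def by auto
      have cs: "\<And>i. chisum F 1 i = (if i \<in> {n..<n+s'} then 1 else 0)"
        unfolding chisum_def F_def by simp
      have lev: "{i. chisum F (2^0) i = 2^0} = {n..<n+s'}" using cs by auto
      have ch: "chain 1 s {n..<n+s'}" unfolding One_nat_def chain.simps
        by (rule exI[of _ "{n..<n+s'}"]) (use s1 in auto)
      have "invF 0 s k n F" unfolding invF_def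
        using cs lev ch s1 hn by (auto simp: F_def)
      then show "\<exists>F. invF 0 s k n F" by blast
    qed
  qed
next
  case (Suc N)
  show ?case
  proof (intro allI)
    fix s k :: nat
    define s' where "s' = max s 1"
    have s1: "s' \<ge> 1" "s \<le> s'" using s'_def by auto
    define m where "m = (2::nat)^N"
    have m1: "m \<ge> 1" unfolding m_def by simp
    have m2: "(2::nat)^Suc N = m + m" unfolding m_def by simp
    obtain n1 where n1: "\<forall>n\<ge>n1. \<exists>F. invF N s (k + s') n F" using Suc.IH by blast
    show "\<exists>n0. \<forall>n\<ge>n0. \<exists>F. invF (Suc N) s k n F"
    proof (rule exI[of _ n1], intro allI impI)
      fix n assume hn: "n1 \<le> n"
      then obtain F1 where F1: "invF N s (k + s') n F1" using n1 by blast
      define U1 where "U1 = (\<Union>j\<in>{1..m}. F1 j)"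
      have finU1: "finite U1" using F1 unfolding U1_def invF_def m_def by auto
      have neU1: "U1 \<noteq> {}" using F1 m1 unfolding U1_def invF_def m_def by auto
      define M where "M = Max U1"
      have F1M: "\<And>j. j \<in> {1..m} \<Longrightarrow> F1 j \<subseteq> {..M}"
      proof
        fix j x assume "j \<in> {1..m}" "x \<in> F1 j"
        then have "x \<in> U1" unfolding U1_def by blast
        then show "x \<in> {..M}" using finU1 unfolding M_def by simp
      qed
      have nM: "n \<le> M"
      proof -
        have "F1 1 \<noteq> {}" "F1 1 \<subseteq> {n..}" using F1 m1 unfolding invF_def m_def by auto
        then obtain x where "x \<in> F1 1" "n \<le> x" by auto
        moreover have "x \<le> M" using F1M[of 1] m1 \<open>x \<in> F1 1\<close> by auto
        ultimately show ?thesis by simp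
      qed
      obtain n2' where n2': "\<forall>n\<ge>n2'. \<exists>F. invF N (Suc M) (k + s') n F" using Suc.IH by blast
      define n2 where "n2 = max n2' (Suc M)"
      obtain F2 where F2: "invF N (Suc M) (k + s') n2 F2" using n2' max.cobounded1 unfolding n2_def by blast
      define U2 where "U2 = (\<Union>j\<in>{1..m}. F2 j)"
      have finU2: "finite U2" using F2 unfolding U2_def invF_def m_def by auto
      define M2 where "M2 = Max U2"
      have F2M: "\<And>j. j \<in> {1..m} \<Longrightarrow> F2 j \<subseteq> {..M2}"
      proof
        fix j x assume "j \<in> {1..m}" "x \<in> F2 j"
        then have "x \<in> U2" unfolding U2_def by blast
        then show "x \<in> {..M2}" using finU2 unfolding M2_def by simp
      qed
      have F2n: "\<And>j. j \<in> {1..m} \<Longrightarrow> F2 j \<subseteq> {Suc M..}"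
        using F2 unfolding invF_def m_def n2_def by fastforce
      have F1n: "\<And>j. j \<in> {1..m} \<Longrightarrow> F1 j \<subseteq> {n..}"
        using F1 unfolding invF_def m_def by fastforce
      have MM2: "M < M2"
      proof -
        have "F2 1 \<noteq> {}" using F2 m1 unfolding invF_def m_def by auto
        then obtain x where "x \<in> F2 1" by auto
        then have "Suc M \<le> x" "x \<le> M2" using F2n[of 1] F2M[of 1] m1 by auto
        then show ?thesis by simp
      qed
      define Q where "Q = {Suc M2..<Suc M2 + s'}"
      define G where "G = (\<lambda>j. (if j \<le> m then F1 j else F2 (j - m)) \<union> Q)"
      have c1Q: "\<And>i. i \<in> Q \<Longrightarrow> chisum F1 m i = 0"
      proof -
        fix i assume "i \<in> Q"
        then have "M2 < i" unfolding Q_def by auto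
        then show "chisum F1 m i = 0" using F1M MM2
          by (metis chisum_nz atMost_iff leD less_trans subsetD)
      qed
      have c2Q: "\<And>i. i \<in> Q \<Longrightarrow> chisum F2 m i = 0"
      proof -
        fix i assume "i \<in> Q"
        then have "M2 < i" unfolding Q_def by auto
        then show "chisum F2 m i = 0" using F2M
          by (metis chisum_nz atMost_iff leD subsetD)
      qed
      have c1M: "\<And>i. M < i \<Longrightarrow> chisum F1 m i = 0"
        using F1M by (metis chisum_nz atMost_iff leD subsetD)
      have c2M: "\<And>i. i \<le> M \<Longrightarrow> chisum F2 m i = 0"
        using F2n by (metis chisum_nz atLeast_iff not_less_eq_eq subsetD)
      have cQ: "\<And>i. i \<in> Q \<Longrightarrow> chisum G (m + m) i = m + m"
        by (rule chisum_all) (auto simp: G_def)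
      have cnQ: "\<And>i. i \<notin> Q \<Longrightarrow> chisum G (m + m) i = chisum F1 m i + chisum F2 m i"
      proof -
        fix i assume "i \<notin> Q"
        have "chisum G m i = chisum F1 m i"
          by (rule chisum_cong) (use \<open>i \<notin> Q\<close> in \<open>auto simp: G_def\<close>)
        moreover have "chisum (\<lambda>j. G (j + m)) m i = chisum F2 m i"
          by (rule chisum_cong) (use \<open>i \<notin> Q\<close> in \<open>auto simp: G_def\<close>)
        ultimately show "chisum G (m + m) i = chisum F1 m i + chisum F2 m i"
          using chisum_split[of G m i] by simp
      qed
      have cases_i: "\<And>i. i \<notin> Q \<Longrightarrow> (chisum G (m+m) i = chisum F1 m i \<and> chisum F2 m i = 0)
          \<or> (chisum G (m+m) i = chisum F2 m i \<and> chisum F1 m i = 0)"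
      proof -
        fix i assume iQ: "i \<notin> Q"
        show "(chisum G (m+m) i = chisum F1 m i \<and> chisum F2 m i = 0)
          \<or> (chisum G (m+m) i = chisum F2 m i \<and> chisum F1 m i = 0)"
        proof (cases "i \<le> M")
          case True then have "chisum F2 m i = 0" using c2M by blast
          then show ?thesis using cnQ[OF iQ] by simp
        next
          case False then have "chisum F1 m i = 0" using c1M by simp
          then show ?thesis using cnQ[OF iQ] by simp
        qed
      qed
      have part1: "\<forall>j\<in>{1..2^Suc N}. finite (G j) \<and> G j \<noteq> {} \<and> G j \<subseteq> {n..} \<and> card (G j) + k \<le> Min (G j)"
      proof
        fix j :: nat assume hj: "j \<in> {1..2^Suc N}"
        obtain H where H: "finite H" "H \<noteq> {}" "H \<subseteq> {n..}" "H \<subseteq> {..M2}" "card H + (k + s') \<le> Min H"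
          and GH: "G j = H \<union> Q"
        proof (cases "j \<le> m")
          case True
          then have "j \<in> {1..m}" using hj by simp
          then have a: "finite (F1 j)" "F1 j \<noteq> {}" "F1 j \<subseteq> {n..}" "card (F1 j) + (k + s') \<le> Min (F1 j)"
            using invF_set[OF F1, of j] unfolding m_def by auto
          have b: "F1 j \<subseteq> {..M2}" using F1M[OF \<open>j \<in> {1..m}\<close>] MM2 by auto
          have c: "G j = F1 j \<union> Q" using True unfolding G_def by simp
          show ?thesis using that[OF a(1-3) b a(4) c] .
        next
          case False
          then have "j - m \<in> {1..m}" using hj m2 by auto
          then have a: "finite (F2 (j-m))" "F2 (j-m) \<noteq> {}" "card (F2 (j-m)) + (k + s') \<le> Min (F2 (j-m))"
            using invF_set[OF F2, of "j-m"] unfolding m_def by auto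
          have b: "F2 (j-m) \<subseteq> {..M2}" using F2M[OF \<open>j - m \<in> {1..m}\<close>] by auto
          have b2: "F2 (j-m) \<subseteq> {n..}" using F2n[OF \<open>j - m \<in> {1..m}\<close>] nM by auto
          have c: "G j = F2 (j-m) \<union> Q" using False unfolding G_def by simp
          show ?thesis using that[OF a(1,2) b2 b a(3) c] .
        qed
        have disj: "H \<inter> Q = {}" using H(4) unfolding Q_def by auto
        have finQ: "finite Q" "card Q = s'" unfolding Q_def by auto
        have nQ: "Q \<subseteq> {n..}" using nM MM2 unfolding Q_def by auto
        have "card (H \<union> Q) = card H + s'" using disj H(1) finQ card_Un_disjoint by metis
        moreover have "Min (H \<union> Q) = Min H"
        proof (rule Min_eqI)
          show "finite (H \<union> Q)" using H(1) finQ by simp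
          show "Min H \<in> H \<union> Q" using H(1,2) by simp
          fix y assume "y \<in> H \<union> Q"
          then show "Min H \<le> y"
          proof
            assume "y \<in> H" then show ?thesis using H(1) by simp
          next
            assume "y \<in> Q"
            have "Min H \<in> H" using H(1,2) by simp
            then have "Min H \<le> M2" using H(4) by auto
            then show ?thesis using \<open>y \<in> Q\<close> unfolding Q_def by auto
          qed
        qed
        ultimately show "finite (G j) \<and> G j \<noteq> {} \<and> G j \<subseteq> {n..} \<and> card (G j) + k \<le> Min (G j)"
          using GH H finQ nQ by auto
      qed
      have le1: "\<And>i. chisum F1 m i \<le> m" "\<And>i. chisum F2 m i \<le> m" using chisum_le by auto
      have part2: "\<forall>i. chisum G (2^Suc N) i \<noteq> 0 \<longrightarrow> (\<exists>r\<le>Suc N. chisum G (2^Suc N) i = 2^r)"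
      proof (intro allI impI)
        fix i assume nz: "chisum G (2^Suc N) i \<noteq> 0"
        show "\<exists>r\<le>Suc N. chisum G (2^Suc N) i = 2^r"
        proof (cases "i \<in> Q")
          case True then show ?thesis using cQ m2 by auto
        next
          case False
          then show ?thesis using cases_i[OF False] nz F1 F2 m2 unfolding invF_def m_def
            by (metis le_SucI)
        qed
      qed
      have part3: "\<forall>r\<le>Suc N. chain (2^(Suc N-r)) s {i. chisum G (2^Suc N) i = 2^r}"
      proof (intro allI impI)
        fix r assume hr: "r \<le> Suc N"
        show "chain (2^(Suc N-r)) s {i. chisum G (2^Suc N) i = 2^r}"
        proof (cases "r = Suc N")
          case True
          have "{i. chisum G (2^Suc N) i = 2^r} = Q"
          proof (intro set_eqI iffI)
            fix i assume "i \<in> {i. chisum G (2^Suc N) i = 2^r}"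
            then have e: "chisum G (m+m) i = m + m" using True m2 by simp
            show "i \<in> Q"
            proof (rule ccontr)
              assume "i \<notin> Q"
              then show False using cases_i[of i] e le1[of i] m1 by fastforce
            qed
          next
            fix i assume "i \<in> Q" then show "i \<in> {i. chisum G (2^Suc N) i = 2^r}"
              using cQ True m2 by simp
          qed
          moreover have "chain 1 s Q" unfolding One_nat_def chain.simps
            by (rule exI[of _ Q]) (use s1 in \<open>auto simp: Q_def\<close>)
          ultimately show ?thesis using True by simp
        next
          case False
          then have rN: "r \<le> N" using hr by simp
          define L1 where "L1 = {i. chisum F1 m i = 2^r}"
          define L2 where "L2 = {i. chisum F2 m i = 2^r}"
          have ch1: "chain (2^(N-r)) s L1" using F1 rN unfolding invF_def L1_def m_def by blast
          have ch2: "chain (2^(N-r)) (Suc M) L2" using F2 rN unfolding invF_def L2_def m_def by blast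
          have L1M: "L1 \<subseteq> {..M}"
          proof
            fix x assume "x \<in> L1"
            then have "chisum F1 m x \<noteq> 0" unfolding L1_def by simp
            then show "x \<in> {..M}" using c1M by (meson atMost_iff not_less)
          qed
          have L2M: "L2 \<subseteq> {M<..}"
          proof
            fix x assume "x \<in> L2"
            then have "chisum F2 m x \<noteq> 0" unfolding L2_def by simp
            then show "x \<in> {M<..}" using c2M by (meson greaterThan_iff not_less)
          qed
          have pow: "(2::nat)^(N-r) = Suc (2^(N-r) - 1)" by simp
          have sM: "s \<le> Suc M" using chain_sub[of "2^(N-r) - 1" s L1 M] ch1 L1M pow by simp
          have "chain (2^(N-r) + 2^(N-r)) s (L1 \<union> L2)" using chain_concat[OF ch1 ch2 L1M L2M sM] .
          moreover have "(2::nat)^(N-r) + 2^(N-r) = 2^(Suc N - r)" using rN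
            by (simp add: Suc_diff_le)
          moreover have "{i. chisum G (2^Suc N) i = 2^r} = L1 \<union> L2"
          proof (intro set_eqI iffI)
            fix i assume "i \<in> {i. chisum G (2^Suc N) i = 2^r}"
            then have e: "chisum G (m+m) i = 2^r" using m2 by simp
            have "i \<notin> Q"
            proof
              assume "i \<in> Q"
              then have "(2::nat)^r = 2^Suc N" using e cQ m2 by simp
              then show False using rN by (metis Suc_n_not_le_n power_inject_exp one_less_numeral_iff semiring_norm(76))
            qed
            then show "i \<in> L1 \<union> L2" using cases_i[of i] e unfolding L1_def L2_def by auto
          next
            fix i assume "i \<in> L1 \<union> L2"
            moreover have "i \<notin> Q" using \<open>i \<in> L1 \<union> L2\<close> c1Q c2Q unfolding L1_def L2_def by auto
            ultimately show "i \<in> {i. chisum G (2^Suc N) i = 2^r}"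
              using cases_i[of i] m2 unfolding L1_def L2_def by auto
          qed
          ultimately show ?thesis by simp
        qed
      qed
      show "\<exists>F. invF (Suc N) s k n F" unfolding invF_def using part1 part2 part3 by blast
    qed
  qed
qed

theorem mainTheorem13:
  fixes N :: nat
  assumes "N \<ge> 1"
  shows "\<exists>F :: nat \<Rightarrow> nat set.
           (\<forall>j\<in>{1..2^N}. schreier (F j)) \<and>
           (\<forall>i. i \<ge> 1 \<longrightarrow> chisum F (2^N) i \<noteq> 0 \<longrightarrow>
                 (\<exists>r\<le>N. chisum F (2^N) i = 2^r)) \<and>
           (\<forall>r\<le>N. phi {i. i \<ge> 1 \<and> chisum F (2^N) i = 2^r} \<ge> 2^(N-r))"
proof -
  obtain n0 where "\<forall>n\<ge>n0. \<exists>F. invF N 1 0 n F" using construct by blast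
  then obtain F where F: "invF N 1 0 (max n0 1) F" using max.cobounded1 by blast
  define n where "n = max n0 1"
  have n1: "n \<ge> 1" unfolding n_def by simp
  have Fj: "\<forall>j\<in>{1..2^N}. finite (F j) \<and> F j \<noteq> {} \<and> F j \<subseteq> {n..} \<and> card (F j) \<le> Min (F j)"
    using invF_set[OF F] unfolding n_def by (metis add_0_right)
  have p1: "\<forall>j\<in>{1..2^N}. schreier (F j)"
  proof
    fix j :: nat assume "j \<in> {1..2^N}"
    then have "finite (F j)" "F j \<subseteq> {n..}" "card (F j) \<le> Min (F j)" using Fj by blast+
    then show "schreier (F j)" unfolding schreier_def using n1 by auto
  qed
  have p2: "\<forall>i. i \<ge> 1 \<longrightarrow> chisum F (2^N) i \<noteq> 0 \<longrightarrow> (\<exists>r\<le>N. chisum F (2^N) i = 2^r)"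
    using invF_pow[OF F] by blast
  have p3: "\<forall>r\<le>N. phi {i. i \<ge> 1 \<and> chisum F (2^N) i = 2^r} \<ge> 2^(N-r)"
  proof (intro allI impI)
    fix r assume "r \<le> N"
    define L where "L = {i. chisum F (2^N) i = 2^r}"
    have ch: "chain (2^(N-r)) 1 L" using invF_chain[OF F \<open>r \<le> N\<close>] unfolding L_def by blast
    have L1: "\<And>i. i \<in> L \<Longrightarrow> i \<ge> 1"
    proof -
      fix i assume "i \<in> L"
      then have "chisum F (2^N) i \<noteq> 0" unfolding L_def by simp
      then obtain j where "j \<in> {1..2^N}" "i \<in> F j" using chisum_nz by blast
      then show "i \<ge> 1" using Fj n1 by force
    qed
    have eq: "{i. i \<ge> 1 \<and> chisum F (2^N) i = 2^r} = L" using L1 unfolding L_def by auto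
    have pow: "(2::nat)^(N-r) = Suc (2^(N-r) - 1)" by simp
    have "good (2^(N-r)) L" using chain_good[of "2^(N-r) - 1" 1 L] ch pow by simp
    moreover have "finite L" using chain_finite ch by blast
    moreover have "0 \<notin> L" using L1 by fastforce
    ultimately show "phi {i. i \<ge> 1 \<and> chisum F (2^N) i = 2^r} \<ge> 2^(N-r)"
      using phi_ge eq by simp
  qed
  show ?thesis using p1 p2 p3 by blast
qed

end
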